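(* Let $\mathcal{N}:\mathcal{L}(\mathbb{C}^{d_A})\to\mathcal{L}(\mathbb{C}^{d_B})$ be a quantum channel and let $d=\min\{d_A,d_B\}$. Then for all $n,m\in\mathbb{N}$, $$\mathcal{P}^{n\to m}(\mathcal{N}(\mathcal{Q}_{d_A}))\subseteq \mathcal{P}^{n\to m}(\mathcal{Q}_d).$$
   Context: A quantum channel is a completely positive trace-preserving (CPTP) map; $\mathcal{L}(\mathbb{C}^k)$ denotes the linear operators on $\mathbb{C}^k$. For a channel $\mathcal{N}:\mathcal{L}(\mathbb{C}^{d_A})\to\mathcal{L}(\mathbb{C}^{d_B})$ and $n,m\in\mathbb{N}$, $\mathcal{P}^{n\to m}(\mathcal{N}(\mathcal{Q}_{d_A}))$ denotes the set of all $n\times m$ matrices $P$ with $P_{ij}=\operatorname{Tr}[\Lambda_j\,\mathcal{N}(\rho_i)]$, where $\rho_1,\dots,\rho_n$ are density matrices on $\mathbb{C}^{d_A}$ and $\{\Lambda_j\}_{j=1}^m$ is a POVM on $\mathbb{C}^{d_B}$ (such matrices are called channel matrices). $\mathcal{P}^{n\to m}(\mathcal{Q}_d)$ denotes this set when $\mathcal{N}$ is the identity channel on $\mathcal{L}(\mathbb{C}^d)$. *)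

theory Defs
  imports "Jordan_Normal_Form.Matrix" "Jordan_Normal_Form.Conjugate" Complex_Main
begin

definition mtrace :: "complex mat \<Rightarrow> complex" where
  "mtrace A = (\<Sum>i<dim_row A. A $$ (i,i))"

definition psd :: "nat \<Rightarrow> complex mat \<Rightarrow> bool" where
  "psd k A \<longleftrightarrow> A \<in> carrier_mat k k \<and>
     (\<forall>v \<in> carrier_vec k. conjugate v \<bullet> (A *\<^sub>v v) \<in> \<real> \<and> 0 \<le> Re (conjugate v \<bullet> (A *\<^sub>v v)))"

definition density :: "nat \<Rightarrow> complex mat \<Rightarrow> bool" where
  "density k \<rho> \<longleftrightarrow> psd k \<rho> \<and> mtrace \<rho> = 1"

definition povm :: "nat \<Rightarrow> nat \<Rightarrow> (nat \<Rightarrow> complex mat) \<Rightarrow> bool" where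
  "povm k m \<Lambda> \<longleftrightarrow> (\<forall>j<m. psd k (\<Lambda> j)) \<and>
     (\<forall>a<k. \<forall>b<k. (\<Sum>j<m. \<Lambda> j $$ (a,b)) = (if a = b then 1 else 0))"

definition lin_map :: "nat \<Rightarrow> nat \<Rightarrow> (complex mat \<Rightarrow> complex mat) \<Rightarrow> bool" where
  "lin_map dA dB N \<longleftrightarrow>
     (\<forall>A \<in> carrier_mat dA dA. N A \<in> carrier_mat dB dB) \<and>
     (\<forall>A \<in> carrier_mat dA dA. \<forall>B \<in> carrier_mat dA dA. N (A + B) = N A + N B) \<and>
     (\<forall>c. \<forall>A \<in> carrier_mat dA dA. N (c \<cdot>\<^sub>m A) = c \<cdot>\<^sub>m N A)"

text \<open>The map id_k (x) N acting on L(C^k (x) C^dA): a (k*dA) x (k*dA) matrix is viewed as a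
  k x k block matrix with dA x dA blocks, and N is applied blockwise.\<close>
definition ampl :: "nat \<Rightarrow> nat \<Rightarrow> nat \<Rightarrow> (complex mat \<Rightarrow> complex mat) \<Rightarrow> complex mat \<Rightarrow> complex mat" where
  "ampl k dA dB N X = mat (k*dB) (k*dB) (\<lambda>(i,j).
     N (mat dA dA (\<lambda>(p,q). X $$ ((i div dB)*dA + p, (j div dB)*dA + q))) $$ (i mod dB, j mod dB))"

definition completely_positive :: "nat \<Rightarrow> nat \<Rightarrow> (complex mat \<Rightarrow> complex mat) \<Rightarrow> bool" where
  "completely_positive dA dB N \<longleftrightarrow>
     (\<forall>k X. psd (k*dA) X \<longrightarrow> psd (k*dB) (ampl k dA dB N X))"

definition trace_preserving :: "nat \<Rightarrow> (complex mat \<Rightarrow> complex mat) \<Rightarrow> bool" where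
  "trace_preserving dA N \<longleftrightarrow> (\<forall>A \<in> carrier_mat dA dA. mtrace (N A) = mtrace A)"

definition quantum_channel :: "nat \<Rightarrow> nat \<Rightarrow> (complex mat \<Rightarrow> complex mat) \<Rightarrow> bool" where
  "quantum_channel dA dB N \<longleftrightarrow>
     lin_map dA dB N \<and> completely_positive dA dB N \<and> trace_preserving dA N"

definition channel_matrices ::
  "nat \<Rightarrow> nat \<Rightarrow> (complex mat \<Rightarrow> complex mat) \<Rightarrow> nat \<Rightarrow> nat \<Rightarrow> complex mat set" where
  "channel_matrices dA dB N n m = {P. \<exists>\<rho> \<Lambda>. (\<forall>i<n. density dA (\<rho> i)) \<and> povm dB m \<Lambda> \<and>
      P = mat n m (\<lambda>(i,j). mtrace (\<Lambda> j * N (\<rho> i)))}"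

definition quantum_matrices :: "nat \<Rightarrow> nat \<Rightarrow> nat \<Rightarrow> complex mat set" where
  "quantum_matrices d n m = channel_matrices d d id n m"

end

theory Submission imports Defs begin

definition sq :: "nat \<Rightarrow> (nat\<Rightarrow>nat\<Rightarrow>complex) \<Rightarrow> (nat\<Rightarrow>complex) \<Rightarrow> (nat\<Rightarrow>complex) \<Rightarrow> complex" where
  "sq k a f g = (\<Sum>i<k. \<Sum>j<k. cnj (f i) * a i j * g j)"

definition psdf :: "nat \<Rightarrow> (nat\<Rightarrow>nat\<Rightarrow>complex) \<Rightarrow> bool" where
  "psdf k a \<longleftrightarrow> (\<forall>f. 0 \<le> sq k a f f)"

lemma sq_add_r: "sq k a f (\<lambda>i. g i + h i) = sq k a f g + sq k a f h"
  by (simp add: sq_def distrib_left sum.distrib)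
lemma sq_add_l: "sq k a (\<lambda>i. g i + h i) f = sq k a g f + sq k a h f"
  by (simp add: sq_def distrib_right sum.distrib)
lemma sq_scale_r: "sq k a f (\<lambda>i. s * g i) = s * sq k a f g"
  by (simp add: sq_def sum_distrib_left mult_ac)
lemma sq_scale_l: "sq k a (\<lambda>i. s * g i) f = cnj s * sq k a g f"
  by (simp add: sq_def sum_distrib_left mult_ac)

lemma nonneg_complex: "0 \<le> (z::complex) \<longleftrightarrow> Im z = 0 \<and> 0 \<le> Re z"
  by (auto simp: less_eq_complex_def)

lemma sq_herm:
  assumes "psdf k a"
  shows "sq k a g f = cnj (sq k a f g)"
proof -
  let ?x = "sq k a f g" and ?y = "sq k a g f"
  have "0 \<le> sq k a (\<lambda>i. f i + g i) (\<lambda>i. f i + g i)" using assms psdf_def by blast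
  hence "Im (sq k a f f + ?x + ?y + sq k a g g) = 0"
    by (simp add: sq_add_l sq_add_r nonneg_complex)
  moreover have "Im (sq k a f f) = 0" "Im (sq k a g g) = 0"
    using assms by (auto simp: psdf_def nonneg_complex)
  ultimately have 1: "Im ?x + Im ?y = 0" by simp
  have "0 \<le> sq k a (\<lambda>i. f i + \<i> * g i) (\<lambda>i. f i + \<i> * g i)" using assms psdf_def by blast
  hence "Im (sq k a f f + \<i> * ?x - \<i> * ?y + sq k a (\<lambda>i. \<i> * g i) (\<lambda>i. \<i> * g i)) = 0"
    by (simp add: sq_add_l sq_add_r sq_scale_l sq_scale_r nonneg_complex)
  moreover have "sq k a (\<lambda>i. \<i> * g i) (\<lambda>i. \<i> * g i) = sq k a g g"
    by (simp add: sq_scale_l sq_scale_r)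
  ultimately have "Im (sq k a f f + \<i> * ?x - \<i> * ?y + sq k a g g) = 0" by simp
  hence 2: "Re ?x - Re ?y = 0" using \<open>Im (sq k a f f) = 0\<close> \<open>Im (sq k a g g) = 0\<close> by simp
  show ?thesis using 1 2 by (simp add: complex_eq_iff)
qed

definition dl :: "nat \<Rightarrow> nat \<Rightarrow> complex" where "dl r = (\<lambda>i. if i = r then 1 else 0)"

lemma sq_dl_r: "r < k \<Longrightarrow> sq k a f (dl r) = (\<Sum>i<k. cnj (f i) * a i r)"
  by (simp add: sq_def dl_def if_distrib cong: if_cong)
lemma sq_dl_l: assumes "r < k" shows "sq k a (dl r) g = (\<Sum>j<k. a r j * g j)"
proof -
  have "sq k a (dl r) g = (\<Sum>i<k. if i = r then (\<Sum>j<k. a i j * g j) else 0)"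
    unfolding sq_def dl_def by (intro sum.cong) auto
  also have "\<dots> = (\<Sum>j<k. a r j * g j)" by (subst sum.delta) (auto simp: assms)
  finally show ?thesis .
qed
lemma sq_dl: assumes "i < k" "j < k" shows "sq k a (dl i) (dl j) = a i j"
proof -
  have "sq k a (dl i) (dl j) = (\<Sum>l<k. if l = j then a i l else 0)"
    unfolding sq_dl_l[OF assms(1)] unfolding dl_def by (intro sum.cong) auto
  also have "\<dots> = a i j" by (subst sum.delta) (auto simp: assms)
  finally show ?thesis .
qed

lemma sq_expand: "sq k a (\<lambda>i. f i + s * g i) (\<lambda>i. f i + s * g i) =
   sq k a f f + s * sq k a f g + cnj s * sq k a g f + cnj s * s * sq k a g g"
  by (simp add: sq_add_l sq_add_r sq_scale_l sq_scale_r algebra_simps)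

lemma psdf_diag: "psdf k a \<Longrightarrow> r < k \<Longrightarrow> 0 \<le> a r r"
  by (metis psdf_def sq_dl)

lemma zero_row:
  assumes p: "psdf k a" and r: "r < k" and z: "a r r = 0" and j: "j < k"
  shows "a j r = 0 \<and> a r j = 0"
proof -
  let ?c = "a j r"
  have c: "sq k a (dl j) (dl r) = ?c" using sq_dl j r by blast
  have d: "sq k a (dl r) (dl j) = cnj ?c" using sq_herm[OF p] c by metis
  have g: "sq k a (dl r) (dl r) = 0" using sq_dl r z by metis
  have jj: "0 \<le> sq k a (dl j) (dl j)" using p psdf_def by blast
  have "?c = 0"
  proof (rule ccontr)
    assume nz: "?c \<noteq> 0"
    define t where "t = (Re (sq k a (dl j) (dl j)) + 1) / (2 * (cmod ?c)^2)"
    define s where "s = - complex_of_real t * cnj ?c"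
    have A: "0 \<le> sq k a (\<lambda>i. dl j i + s * dl r i) (\<lambda>i. dl j i + s * dl r i)" using p psdf_def by blast
    have B: "sq k a (\<lambda>i. dl j i + s * dl r i) (\<lambda>i. dl j i + s * dl r i) = sq k a (dl j) (dl j) + (s * ?c + cnj s * cnj ?c)"
      by (simp add: sq_expand c d g)
    have C: "s * ?c + cnj s * cnj ?c = - complex_of_real (2 * t * (cmod ?c)^2)"
    proof -
      have "s * ?c + cnj s * cnj ?c = - 2 * complex_of_real t * (cnj ?c * ?c)"
        unfolding s_def by (simp add: algebra_simps)
      also have "cnj ?c * ?c = complex_of_real ((cmod ?c)^2)"
        using complex_norm_square[of ?c] by (simp add: mult.commute)
      finally show ?thesis by simp
    qed
    have D: "2 * t * (cmod ?c)^2 = Re (sq k a (dl j) (dl j)) + 1"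
      unfolding t_def using nz by simp
    have "0 \<le> sq k a (dl j) (dl j) + (- complex_of_real (Re (sq k a (dl j) (dl j))) - 1)"
      using A B C D by (simp del: less_eq_complex_def)
    thus False by (simp add: nonneg_complex)
  qed
  moreover have "a r j = cnj ?c" using d sq_dl[OF r j, of a] by simp
  ultimately show ?thesis by simp
qed



lemma real_cnj: "0 \<le> (z::complex) \<Longrightarrow> cnj z = z"
  by (simp add: nonneg_complex complex_eq_iff)

lemma sq_step_eq:
  "sq k (\<lambda>i j. a i j - a i r * a r j / a r r) f f =
   sq k a f f - (\<Sum>i<k. cnj (f i) * a i r) * (\<Sum>j<k. a r j * f j) / a r r"
  unfolding sq_def by (simp add: sum_subtractf algebra_simps sum_product sum_divide_distrib) (rule sum.swap)

lemma step_psd: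
  assumes p: "psdf k a" and r: "r < k" and nz: "a r r \<noteq> 0"
  shows "psdf k (\<lambda>i j. a i j - a i r * a r j / a r r)"
  unfolding psdf_def
proof
  fix f
  define c where "c = sq k a f (dl r)"
  define d where "d = sq k a (dl r) f"
  have dc: "d = cnj c" unfolding c_def d_def using sq_herm[OF p] by blast
  have rr: "cnj (a r r) = a r r" using real_cnj psdf_diag[OF p r] by blast
  have g: "sq k a (dl r) (dl r) = a r r" using sq_dl r by blast
  define s where "s = - d / a r r"
  have cs: "cnj s = - c / a r r" unfolding s_def using rr dc by simp
  have "0 \<le> sq k a (\<lambda>i. f i + s * dl r i) (\<lambda>i. f i + s * dl r i)" using p psdf_def by blast
  also have "\<dots> = sq k a f f + s * c + cnj s * d + cnj s * s * a r r"
    by (simp add: sq_expand c_def d_def g)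
  also have "\<dots> = sq k a f f - c * d / a r r"
    unfolding cs unfolding s_def using nz by (simp add: field_simps)
  also have "\<dots> = sq k (\<lambda>i j. a i j - a i r * a r j / a r r) f f"
    unfolding sq_step_eq c_def d_def sq_dl_r[OF r] sq_dl_l[OF r] ..
  finally show "0 \<le> sq k (\<lambda>i j. a i j - a i r * a r j / a r r) f f" .
qed


lemma herm_entry: assumes "psdf k a" "i < k" "j < k" shows "a j i = cnj (a i j)"
proof -
  have "sq k a (dl j) (dl i) = cnj (sq k a (dl i) (dl j))" by (rule sq_herm[OF assms(1)])
  thus ?thesis using sq_dl[of i k j a] sq_dl[of j k i a] assms by simp
qed

lemma rank_one:
  assumes p: "psdf k a" and r: "r < k" and nz: "a r r \<noteq> 0" and i: "i < k" and j: "j < k"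
  shows "(a i r / complex_of_real (sqrt (Re (a r r)))) * cnj (a j r / complex_of_real (sqrt (Re (a r r))))
         = a i r * a r j / a r r"
proof -
  have nn: "0 \<le> a r r" using psdf_diag[OF p r] .
  have re1: "complex_of_real (Re (a r r)) = a r r" using nn by (simp add: nonneg_complex complex_eq_iff)
  have re2: "0 \<le> Re (a r r)" using nn by (simp add: nonneg_complex)
  have hj: "cnj (a j r) = a r j" using herm_entry[OF p j r] by simp
  define q where "q = complex_of_real (sqrt (Re (a r r)))"
  have "q * q = complex_of_real (sqrt (Re (a r r)) * sqrt (Re (a r r)))" unfolding q_def
    by (simp only: of_real_mult)
  also have "\<dots> = a r r" using re2 re1 by (simp only: real_sqrt_mult_self abs_of_nonneg)
  finally have qq: "q * q = a r r" .
  have cq: "cnj q = q" unfolding q_def by simp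
  have "(a i r / q) * cnj (a j r / q) = a i r * cnj (a j r) / (q * q)"
    by (simp only: complex_cnj_divide cq times_divide_times_eq)
  thus ?thesis unfolding q_def[symmetric] qq hj .
qed

lemma decomp:
  "psdf k a \<Longrightarrow> (\<forall>i<k. \<forall>j<k. (i < k - s \<or> j < k - s) \<longrightarrow> a i j = 0) \<Longrightarrow>
   \<exists>us. \<forall>i<k. \<forall>j<k. a i j = (\<Sum>u\<leftarrow>us. u i * cnj (u j))"
proof (induction s arbitrary: a)
  case 0
  thus ?case by (intro exI[of _ "[]"]) auto
next
  case (Suc s)
  show ?case
  proof (cases "k - Suc s = k - s")
    case True
    thus ?thesis using Suc.IH[OF Suc.prems(1)] Suc.prems(2) by simp
  next
    case False
    define r where "r = k - Suc s"
    have r: "r < k" and rs: "k - s = Suc r" using False unfolding r_def by auto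
    show ?thesis
    proof (cases "a r r = 0")
      case True
      have "\<forall>i<k. \<forall>j<k. (i < k - s \<or> j < k - s) \<longrightarrow> a i j = 0"
      proof (intro allI impI)
        fix i j assume ij: "i < k" "j < k" "i < k - s \<or> j < k - s"
        show "a i j = 0"
        proof (cases "i = r \<or> j = r")
          case True
          thus ?thesis using zero_row[OF Suc.prems(1) r \<open>a r r = 0\<close>] ij by auto
        next
          case False
          have "i < r \<or> j < r" using ij(3) False rs by auto
          thus ?thesis using Suc.prems(2) ij unfolding r_def by blast
        qed
      qed
      thus ?thesis using Suc by blast
    next
      case nz: False
      define a' where "a' = (\<lambda>i j. a i j - a i r * a r j / a r r)"
      have p': "psdf k a'" unfolding a'_def using step_psd[OF Suc.prems(1) r nz] .
      have "\<forall>i<k. \<forall>j<k. (i < k - s \<or> j < k - s) \<longrightarrow> a' i j = 0"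
      proof (intro allI impI)
        fix i j assume ij: "i < k" "j < k" "i < k - s \<or> j < k - s"
        have z: "\<And>i j. i < k \<Longrightarrow> j < k \<Longrightarrow> i < r \<or> j < r \<Longrightarrow> a i j = 0"
          using Suc.prems(2) unfolding r_def by blast
        show "a' i j = 0"
        proof (cases "i = r")
          case True thus ?thesis unfolding a'_def using nz by simp
        next
          case ni: False
          show ?thesis
          proof (cases "j = r")
            case True thus ?thesis unfolding a'_def using nz by simp
          next
            case False
            have ir: "i < r \<or> j < r" using False ij ni rs by auto
            have "a i j = 0" using z ij ir by blast
            moreover have "a i r * a r j = 0" using z[of i r] z[of r j] ij r ir by auto
            ultimately show ?thesis unfolding a'_def by simp
          qed
        qed
      qed
      from Suc.IH[OF p' this] obtain us where us: "\<forall>i<k. \<forall>j<k. a' i j = (\<Sum>u\<leftarrow>us. u i * cnj (u j))" by blast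
      define u where "u = (\<lambda>i. a i r / complex_of_real (sqrt (Re (a r r))))"
      show ?thesis
      proof (intro exI[of _ "u # us"] allI impI)
        fix i j assume i: "i < k" and j: "j < k"
        have "a i j = a i r * a r j / a r r + a' i j" unfolding a'_def by simp
        also have "a i r * a r j / a r r = u i * cnj (u j)"
          unfolding u_def using rank_one[OF Suc.prems(1) r nz i j] by simp
        finally show "a i j = (\<Sum>u\<leftarrow>u # us. u i * cnj (u j))" using us i j by simp
      qed
    qed
  qed
qed

lemma trace_psd:
  assumes a: "psdf k a" and b: "psdf k b"
  shows "0 \<le> (\<Sum>i<k. \<Sum>j<k. a i j * b j i)"
proof -
  obtain us where us: "\<forall>i<k. \<forall>j<k. a i j = (\<Sum>u\<leftarrow>us. u i * cnj (u j))"
    using decomp[OF a, of k] by auto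
  have e1: "(\<Sum>i<k. \<Sum>j<k. a i j * b j i) = (\<Sum>i<k. \<Sum>j<k. (\<Sum>u\<leftarrow>us. u i * cnj (u j)) * b j i)"
    using us by (intro sum.cong refl) simp
  have e2: "(\<Sum>i<k. \<Sum>j<k. (\<Sum>u\<leftarrow>ws. u i * cnj (u j)) * b j i) = (\<Sum>u\<leftarrow>ws. sq k b u u)" for ws
  proof (induction ws)
    case Nil thus ?case by simp
  next
    case (Cons v vs)
    have "sq k b v v = (\<Sum>i<k. \<Sum>j<k. v i * cnj (v j) * b j i)"
      unfolding sq_def by (subst sum.swap) (simp add: mult_ac)
    thus ?case using Cons by (simp add: distrib_right sum.distrib)
  qed
  have e3: "0 \<le> (\<Sum>u\<leftarrow>ws. sq k b u u)" for ws
  proof (induction ws)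
    case Nil thus ?case by simp
  next
    case (Cons v vs)
    have "0 \<le> sq k b v v" using b psdf_def by blast
    thus ?case using Cons by (simp add: add_nonneg_nonneg del: less_eq_complex_def)
  qed
  show ?thesis using e1 e2[of us] e3[of us] by (simp del: less_eq_complex_def)
qed


lemma psd_psdf: "psd k A \<longleftrightarrow> A \<in> carrier_mat k k \<and> psdf k (\<lambda>i j. A $$ (i,j))"
proof -
  have key: "conjugate v \<bullet> (A *\<^sub>v v) = sq k (\<lambda>i j. A $$ (i,j)) (\<lambda>i. v $ i) (\<lambda>i. v $ i)"
    if "A \<in> carrier_mat k k" "v \<in> carrier_vec k" for v
    using that unfolding sq_def scalar_prod_def
    by (simp add: lessThan_atLeast0 sum_distrib_left mult.assoc scalar_prod_def)
  have re: "(z \<in> \<real> \<and> 0 \<le> Re z) \<longleftrightarrow> 0 \<le> z" for z :: complex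
    by (simp add: nonneg_complex complex_is_Real_iff)
  show ?thesis
  proof
    assume p: "psd k A"
    hence A: "A \<in> carrier_mat k k" unfolding psd_def by blast
    have "0 \<le> sq k (\<lambda>i j. A $$ (i,j)) f f" for f
    proof -
      have "0 \<le> conjugate (vec k f) \<bullet> (A *\<^sub>v vec k f)" using p re unfolding psd_def by auto
      also have "conjugate (vec k f) \<bullet> (A *\<^sub>v vec k f) = sq k (\<lambda>i j. A $$ (i,j)) f f"
        using key[OF A, of "vec k f"] unfolding sq_def by simp
      finally show ?thesis .
    qed
    thus "A \<in> carrier_mat k k \<and> psdf k (\<lambda>i j. A $$ (i,j))" using A psdf_def by blast
  next
    assume "A \<in> carrier_mat k k \<and> psdf k (\<lambda>i j. A $$ (i,j))"
    thus "psd k A" unfolding psd_def psdf_def using key re by metis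
  qed
qed

lemma mtrace_mult: assumes "A \<in> carrier_mat k k" "B \<in> carrier_mat k k"
  shows "mtrace (A * B) = (\<Sum>i<k. \<Sum>j<k. A $$ (i,j) * B $$ (j,i))"
  using assms unfolding mtrace_def by (simp add: lessThan_atLeast0 scalar_prod_def)

definition E :: "nat \<Rightarrow> nat \<Rightarrow> nat \<Rightarrow> complex mat" where
  "E d a b = mat d d (\<lambda>(p,q). if p = a \<and> q = b then 1 else 0)"
definition XS :: "nat \<Rightarrow> complex mat \<Rightarrow> (nat \<times> nat) set \<Rightarrow> complex mat" where
  "XS d X S = mat d d (\<lambda>(p,q). if (p,q) \<in> S then X $$ (p,q) else 0)"

lemma E_carrier[simp]: "E d a b \<in> carrier_mat d d" unfolding E_def by simp

lemma lin_zero: assumes l: "lin_map dA dB N" and p: "p < dB" and q: "q < dB"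
  shows "N (0\<^sub>m dA dA) $$ (p,q) = 0"
proof -
  have z: "0\<^sub>m dA dA \<in> carrier_mat dA dA" by simp
  have "N ((0::complex) \<cdot>\<^sub>m 0\<^sub>m dA dA) = 0 \<cdot>\<^sub>m N (0\<^sub>m dA dA)" using l z unfolding lin_map_def by blast
  moreover have "(0::complex) \<cdot>\<^sub>m 0\<^sub>m dA dA = 0\<^sub>m dA dA" by (intro eq_matI) auto
  moreover have "N (0\<^sub>m dA dA) \<in> carrier_mat dB dB" using l z unfolding lin_map_def by blast
  ultimately show ?thesis using p q by (metis carrier_matD index_smult_mat(1) mult_zero_left)
qed

lemma lin_entry:
  assumes l: "lin_map dA dB N" and fin: "finite S" and S: "S \<subseteq> {..<dA} \<times> {..<dA}"
    and p: "p < dB" and q: "q < dB"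
  shows "N (XS dA X S) $$ (p,q) = (\<Sum>(a,b)\<in>S. X $$ (a,b) * N (E dA a b) $$ (p,q))"
  using fin S
proof (induction S rule: finite_induct)
  case empty
  have "XS dA X {} = 0\<^sub>m dA dA" unfolding XS_def by (intro eq_matI) auto
  thus ?case using lin_zero[OF l p q] by simp
next
  case (insert x S)
  obtain a b where x: "x = (a,b)" by (cases x)
  have ab: "a < dA" "b < dA" using insert x by auto
  have eq: "XS dA X (insert x S) = XS dA X S + (X $$ (a,b)) \<cdot>\<^sub>m E dA a b"
    unfolding XS_def E_def x using insert(2) x by (intro eq_matI) auto
  have c1: "XS dA X S \<in> carrier_mat dA dA" unfolding XS_def by simp
  have c2: "(X $$ (a,b)) \<cdot>\<^sub>m E dA a b \<in> carrier_mat dA dA" by simp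
  have "N (XS dA X (insert x S)) = N (XS dA X S) + N ((X $$ (a,b)) \<cdot>\<^sub>m E dA a b)"
    unfolding eq using l c1 c2 unfolding lin_map_def by blast
  also have "N ((X $$ (a,b)) \<cdot>\<^sub>m E dA a b) = (X $$ (a,b)) \<cdot>\<^sub>m N (E dA a b)"
    using l unfolding lin_map_def by simp
  finally have "N (XS dA X (insert x S)) = N (XS dA X S) + (X $$ (a,b)) \<cdot>\<^sub>m N (E dA a b)" .
  moreover have "N (E dA a b) \<in> carrier_mat dB dB" "N (XS dA X S) \<in> carrier_mat dB dB"
    using l c1 unfolding lin_map_def by auto
  ultimately have "N (XS dA X (insert x S)) $$ (p,q) = N (XS dA X S) $$ (p,q) + X $$ (a,b) * N (E dA a b) $$ (p,q)"
    using p q by simp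
  thus ?case using insert x by simp
qed

lemma N_expand:
  assumes l: "lin_map dA dB N" and X: "X \<in> carrier_mat dA dA" and p: "p < dB" and q: "q < dB"
  shows "N X $$ (p,q) = (\<Sum>a<dA. \<Sum>b<dA. X $$ (a,b) * N (E dA a b) $$ (p,q))"
proof -
  have "XS dA X ({..<dA} \<times> {..<dA}) = X" unfolding XS_def using X by (intro eq_matI) auto
  hence "N X $$ (p,q) = (\<Sum>(a,b)\<in>{..<dA} \<times> {..<dA}. X $$ (a,b) * N (E dA a b) $$ (p,q))"
    using lin_entry[OF l _ _ p q, of "{..<dA} \<times> {..<dA}" X] by simp
  thus ?thesis by (simp add: sum.cartesian_product)
qed

lemma swap4: "(\<Sum>p\<in>A. \<Sum>q\<in>B. \<Sum>a\<in>C. \<Sum>b\<in>D. f p q a b) = (\<Sum>a\<in>C. \<Sum>b\<in>D. \<Sum>p\<in>A. \<Sum>q\<in>B. f p q a b)"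
proof -
  have "(\<Sum>p\<in>A. \<Sum>q\<in>B. \<Sum>a\<in>C. \<Sum>b\<in>D. f p q a b) = (\<Sum>p\<in>A. \<Sum>a\<in>C. \<Sum>q\<in>B. \<Sum>b\<in>D. f p q a b)"
    by (rule sum.cong[OF refl], rule sum.swap)
  also have "\<dots> = (\<Sum>p\<in>A. \<Sum>a\<in>C. \<Sum>b\<in>D. \<Sum>q\<in>B. f p q a b)"
    by (rule sum.cong[OF refl], rule sum.cong[OF refl], rule sum.swap)
  also have "\<dots> = (\<Sum>a\<in>C. \<Sum>p\<in>A. \<Sum>b\<in>D. \<Sum>q\<in>B. f p q a b)"
    by (rule sum.swap)
  also have "\<dots> = (\<Sum>a\<in>C. \<Sum>b\<in>D. \<Sum>p\<in>A. \<Sum>q\<in>B. f p q a b)"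
    by (rule sum.cong[OF refl], rule sum.swap)
  finally show ?thesis .
qed

lemma Phi_expand:
  assumes l: "lin_map dA dB N" and L: "L \<in> carrier_mat dB dB" and X: "X \<in> carrier_mat dA dA"
  shows "mtrace (L * N X) = (\<Sum>a<dA. \<Sum>b<dA. X $$ (a,b) * mtrace (L * N (E dA a b)))"
proof -
  have NX: "N X \<in> carrier_mat dB dB" and NE: "\<And>a b. N (E dA a b) \<in> carrier_mat dB dB"
    using l X unfolding lin_map_def by auto
  have "mtrace (L * N X) = (\<Sum>p<dB. \<Sum>q<dB. L $$ (p,q) * N X $$ (q,p))"
    by (rule mtrace_mult[OF L NX])
  also have "\<dots> = (\<Sum>p<dB. \<Sum>q<dB. \<Sum>a<dA. \<Sum>b<dA. L $$ (p,q) * (X $$ (a,b) * N (E dA a b) $$ (q,p)))"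
    by (intro sum.cong refl) (simp add: N_expand[OF l X] sum_distrib_left)
  also have "\<dots> = (\<Sum>a<dA. \<Sum>b<dA. \<Sum>p<dB. \<Sum>q<dB. L $$ (p,q) * (X $$ (a,b) * N (E dA a b) $$ (q,p)))"
    by (rule swap4)
  also have "\<dots> = (\<Sum>a<dA. \<Sum>b<dA. X $$ (a,b) * mtrace (L * N (E dA a b)))"
    by (intro sum.cong refl) (simp add: mtrace_mult[OF L NE] sum_distrib_left mult_ac)
  finally show ?thesis .
qed


lemma ampl1: assumes l: "lin_map dA dB N" and X: "X \<in> carrier_mat dA dA"
  shows "ampl 1 dA dB N X = N X"
proof -
  have NX: "N X \<in> carrier_mat dB dB" using l X unfolding lin_map_def by blast
  have "mat dA dA (\<lambda>(p,q). X $$ (0 * dA + p, 0 * dA + q)) = X" using X by (intro eq_matI) auto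
  hence "\<And>i. i < dB \<Longrightarrow> mat dA dA (\<lambda>(p,q). X $$ ((i div dB) * dA + p, (i div dB) * dA + q)) = X"
    by simp
  thus ?thesis unfolding ampl_def using NX by (intro eq_matI) auto
qed

lemma cp1: assumes "quantum_channel dA dB N" "psd dA X" shows "psd dB (N X)"
proof -
  have l: "lin_map dA dB N" and cp: "completely_positive dA dB N" using assms unfolding quantum_channel_def by auto
  have X: "X \<in> carrier_mat dA dA" using assms(2) unfolding psd_def by blast
  have "psd (1*dA) X" using assms(2) by simp
  hence "psd (1*dB) (ampl 1 dA dB N X)" using cp unfolding completely_positive_def by blast
  thus ?thesis using ampl1[OF l X] by simp
qed

lemma povm_sum_trace:
  assumes L: "povm dB m \<Lambda>" and Y: "Y \<in> carrier_mat dB dB"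
  shows "(\<Sum>j<m. mtrace (\<Lambda> j * Y)) = mtrace Y"
proof -
  have Lc: "\<And>j. j < m \<Longrightarrow> \<Lambda> j \<in> carrier_mat dB dB" using L unfolding povm_def psd_def by blast
  have "(\<Sum>j<m. mtrace (\<Lambda> j * Y)) = (\<Sum>j<m. \<Sum>p<dB. \<Sum>q<dB. \<Lambda> j $$ (p,q) * Y $$ (q,p))"
    using mtrace_mult[OF Lc Y] by simp
  also have "\<dots> = (\<Sum>p<dB. \<Sum>j<m. \<Sum>q<dB. \<Lambda> j $$ (p,q) * Y $$ (q,p))" by (rule sum.swap)
  also have "\<dots> = (\<Sum>p<dB. \<Sum>q<dB. \<Sum>j<m. \<Lambda> j $$ (p,q) * Y $$ (q,p))"
    by (rule sum.cong[OF refl], rule sum.swap)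
  also have "\<dots> = (\<Sum>p<dB. \<Sum>q<dB. (if p = q then 1 else 0) * Y $$ (q,p))"
  proof (intro sum.cong refl)
    fix p q assume "p \<in> {..<dB}" "q \<in> {..<dB}"
    hence "(\<Sum>j<m. \<Lambda> j $$ (p,q)) = (if p = q then 1 else 0)" using L unfolding povm_def by auto
    thus "(\<Sum>j<m. \<Lambda> j $$ (p,q) * Y $$ (q,p)) = (if p = q then 1 else 0) * Y $$ (q,p)"
      by (simp add: sum_distrib_right[symmetric])
  qed
  also have "\<dots> = (\<Sum>p<dB. Y $$ (p,p))"
  proof (intro sum.cong refl)
    fix p assume p: "p \<in> {..<dB}"
    have "(\<Sum>q<dB. (if p = q then 1 else 0) * Y $$ (q,p)) = (\<Sum>q<dB. if p = q then Y $$ (q,p) else 0)"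
      by (intro sum.cong refl) auto
    also have "\<dots> = Y $$ (p,p)" using p by (subst sum.delta') auto
    finally show "(\<Sum>q<dB. (if p = q then 1 else 0) * Y $$ (q,p)) = Y $$ (p,p)" .
  qed
  also have "\<dots> = mtrace Y" unfolding mtrace_def using Y by simp
  finally show ?thesis .
qed

lemma mtrace_E: "a < d \<Longrightarrow> b < d \<Longrightarrow> mtrace (E d a b) = (if a = b then 1 else 0)"
proof -
  assume ab: "a < d" "b < d"
  have "mtrace (E d a b) = (\<Sum>i<d. if i = a then (if a = b then 1 else 0) else 0)"
    unfolding mtrace_def E_def by (intro sum.cong) auto
  also have "\<dots> = (if a = b then 1 else 0)" using ab by (subst sum.delta) auto
  finally show ?thesis .
qed

theorem proposition1:
  fixes dA dB :: nat and N :: "complex mat \<Rightarrow> complex mat"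
  assumes "quantum_channel dA dB N"
  shows "\<forall>n m. channel_matrices dA dB N n m \<subseteq> quantum_matrices (min dA dB) n m"
proof (intro allI subsetI)
  fix n m P assume "P \<in> channel_matrices dA dB N n m"
  then obtain \<rho> \<Lambda> where rho: "\<forall>i<n. density dA (\<rho> i)" and L: "povm dB m \<Lambda>"
    and P: "P = mat n m (\<lambda>(i,j). mtrace (\<Lambda> j * N (\<rho> i)))"
    unfolding channel_matrices_def by blast
  have l: "lin_map dA dB N" and tp: "trace_preserving dA N"
    using assms unfolding quantum_channel_def by auto
  have rc: "\<And>i. i < n \<Longrightarrow> \<rho> i \<in> carrier_mat dA dA" using rho unfolding density_def psd_def by blast
  have Lc: "\<And>j. j < m \<Longrightarrow> \<Lambda> j \<in> carrier_mat dB dB" using L unfolding povm_def psd_def by blast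
  show "P \<in> quantum_matrices (min dA dB) n m"
  proof (cases "dB \<le> dA")
    case True
    hence md: "min dA dB = dB" by simp
    have "\<forall>i<n. density dB (N (\<rho> i))"
    proof (intro allI impI)
      fix i assume i: "i < n"
      have "psd dB (N (\<rho> i))" using cp1[OF assms] rho i unfolding density_def by blast
      moreover have "mtrace (N (\<rho> i)) = 1" using tp rc[OF i] rho i unfolding trace_preserving_def density_def by simp
      ultimately show "density dB (N (\<rho> i))" unfolding density_def by blast
    qed
    thus ?thesis unfolding md quantum_matrices_def channel_matrices_def using L P
      by (intro CollectI exI[of _ "\<lambda>i. N (\<rho> i)"] exI[of _ \<Lambda>]) simp
  next
    case False
    hence md: "min dA dB = dA" by simp
    define L' where "L' = (\<lambda>j. mat dA dA (\<lambda>(b,a). mtrace (\<Lambda> j * N (E dA a b))))"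
    have L'c: "L' j \<in> carrier_mat dA dA" for j unfolding L'_def by simp
    have psdL': "psd dA (L' j)" if j: "j < m" for j
    proof -
      have Lj: "psd dB (\<Lambda> j)" using L j unfolding povm_def by blast
      have "0 \<le> sq dA (\<lambda>b a. L' j $$ (b,a)) f f" for f
      proof -
        define X where "X = mat dA dA (\<lambda>(a,b). f a * cnj (f b))"
        have Xc: "X \<in> carrier_mat dA dA" unfolding X_def by simp
        have "psdf dA (\<lambda>a b. X $$ (a,b))" unfolding psdf_def
        proof
          fix g
          have "sq dA (\<lambda>a b. X $$ (a,b)) g g = (\<Sum>a<dA. cnj (g a) * f a) * cnj (\<Sum>b<dA. cnj (g b) * f b)"
            unfolding sq_def X_def by (simp add: sum_product mult_ac sum_conjugate)
          also have "0 \<le> \<dots>" using conjugate_square_positive[of "\<Sum>a<dA. cnj (g a) * f a"] by simp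
          finally show "0 \<le> sq dA (\<lambda>a b. X $$ (a,b)) g g" .
        qed
        hence "psd dA X" using Xc psd_psdf by blast
        hence NX: "psd dB (N X)" using cp1[OF assms] by blast
        have NXc: "N X \<in> carrier_mat dB dB" using NX unfolding psd_def by blast
        have pa: "psdf dB (\<lambda>p q. \<Lambda> j $$ (p,q))" using Lj psd_psdf by blast
        have pb: "psdf dB (\<lambda>p q. N X $$ (p,q))" using NX psd_psdf by blast
        have "0 \<le> (\<Sum>p<dB. \<Sum>q<dB. \<Lambda> j $$ (p,q) * N X $$ (q,p))"
          using trace_psd[OF pa pb] .
        also have "\<dots> = mtrace (\<Lambda> j * N X)" using mtrace_mult[OF Lc[OF j] NXc] by simp
        also have "\<dots> = (\<Sum>a<dA. \<Sum>b<dA. X $$ (a,b) * mtrace (\<Lambda> j * N (E dA a b)))"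
          by (rule Phi_expand[OF l Lc[OF j] Xc])
        also have "\<dots> = (\<Sum>a<dA. \<Sum>b<dA. cnj (f b) * L' j $$ (b,a) * f a)"
          unfolding X_def L'_def by (intro sum.cong refl) (simp add: mult_ac)
        also have "\<dots> = sq dA (\<lambda>b a. L' j $$ (b,a)) f f" unfolding sq_def by (rule sum.swap)
        finally show ?thesis .
      qed
      hence "psdf dA (\<lambda>b a. L' j $$ (b,a))" unfolding psdf_def by blast
      thus ?thesis using psd_psdf L'c by blast
    qed
    have sumL': "(\<Sum>j<m. L' j $$ (a,b)) = (if a = b then 1 else 0)" if "a < dA" "b < dA" for a b
    proof -
      have "(\<Sum>j<m. L' j $$ (a,b)) = (\<Sum>j<m. mtrace (\<Lambda> j * N (E dA b a)))"
        unfolding L'_def using that by simp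
      also have "\<dots> = mtrace (N (E dA b a))"
        using povm_sum_trace[OF L] l unfolding lin_map_def by simp
      also have "\<dots> = mtrace (E dA b a)" using tp unfolding trace_preserving_def by simp
      also have "\<dots> = (if a = b then 1 else 0)" using mtrace_E that by auto
      finally show ?thesis .
    qed
    have povm': "povm dA m L'" unfolding povm_def using psdL' sumL' by blast
    have Peq: "P = mat n m (\<lambda>(i,j). mtrace (L' j * id (\<rho> i)))"
      unfolding P
    proof (intro cong_mat refl)
      fix i j assume i: "i < n" and j: "j < m"
      have "mtrace (\<Lambda> j * N (\<rho> i)) = (\<Sum>a<dA. \<Sum>b<dA. \<rho> i $$ (a,b) * mtrace (\<Lambda> j * N (E dA a b)))"
        by (rule Phi_expand[OF l Lc[OF j] rc[OF i]])
      also have "\<dots> = (\<Sum>b<dA. \<Sum>a<dA. \<rho> i $$ (a,b) * mtrace (\<Lambda> j * N (E dA a b)))"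
        by (rule sum.swap)
      also have "\<dots> = (\<Sum>b<dA. \<Sum>a<dA. L' j $$ (b,a) * \<rho> i $$ (a,b))"
        unfolding L'_def by (intro sum.cong refl) (simp add: mult_ac)
      also have "\<dots> = mtrace (L' j * \<rho> i)" using mtrace_mult[OF L'c rc[OF i]] by simp
      finally show "(case (i, j) of (i, j) \<Rightarrow> mtrace (\<Lambda> j * N (\<rho> i))) =
          (case (i, j) of (i, j) \<Rightarrow> mtrace (L' j * id (\<rho> i)))" by simp
    qed
    show ?thesis unfolding md quantum_matrices_def channel_matrices_def using rho povm' Peq
      by blast
  qed
qed

end
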